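(* Let $f\in\mathscr{C}^1(\mathbb{R},\mathbb{R})$ and $n\ge 2$. Then \[ \mathbb{E}[f'(Z_n)] = K_n\,\mathbb{E}\big[e^{-\beta_n Z_{n-1}}\,f'\big(\alpha_n Z_{n-1}+G_n+\delta_n\big)\big], \] where $G_n$ has the distribution $n^{-1}\operatorname{Geom}(1/n)$ and is independent of $Z_{n-1}$.
   Context: For $m\ge1$, $Z_m=\frac{T_m}{m}-\log m$, where $T_m=\sum_{i=1}^m\tau_i^m$ with $\tau_1^m,\dots,\tau_m^m$ independent and $\tau_i^m\sim\operatorname{Geom}\big(\frac{m-i+1}{m}\big)$ ($T_m$ is the coupon collector's completion time for $m$ coupons). $\operatorname{Geom}(p)$, $p\in(0,1]$, is the geometric law on $\{1,2,\dots\}$: $P(k)=p(1-p)^{k-1}$. Constants: $\alpha_n=1-\frac1n$, $\beta_n=-(n-1)\log\alpha_n$, $K_n=n\big(1-\frac1n\big)^{(n-1)\log(n-1)}$, $\delta_n=\log\big(1-\frac1n\big)-\frac1n\log(n-1)$. *)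

theory Defs
  imports "HOL-Probability.Probability"
begin

text \<open>Geom(p) on {1,2,...}: P(k) = p (1-p)^(k-1), as the library's geometric
  distribution on {0,1,...} shifted by one.\<close>
definition geom1_pmf :: "real \<Rightarrow> nat pmf" where
  "geom1_pmf p = map_pmf Suc (geometric_pmf p)"

text \<open>Partial sums tau_1^m + ... + tau_k^m of independent
  tau_i^m ~ Geom((m-i+1)/m).\<close>
primrec coupon_partial_pmf :: "nat \<Rightarrow> nat \<Rightarrow> nat pmf" where
  "coupon_partial_pmf m 0 = return_pmf 0"
| "coupon_partial_pmf m (Suc k) =
     bind_pmf (coupon_partial_pmf m k)
       (\<lambda>t. map_pmf (\<lambda>x. t + x) (geom1_pmf ((real m - real (Suc k) + 1) / real m)))"

definition T_pmf :: "nat \<Rightarrow> nat pmf" where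
  "T_pmf m = coupon_partial_pmf m m"

definition Z_pmf :: "nat \<Rightarrow> real pmf" where
  "Z_pmf m = map_pmf (\<lambda>t. real t / real m - ln (real m)) (T_pmf m)"

definition G_pmf :: "nat \<Rightarrow> real pmf" where
  "G_pmf n = map_pmf (\<lambda>k. real k / real n) (geom1_pmf (1 / real n))"

definition alpha_n :: "nat \<Rightarrow> real" where
  "alpha_n n = 1 - 1 / real n"

definition beta_n :: "nat \<Rightarrow> real" where
  "beta_n n = - (real n - 1) * ln (alpha_n n)"

definition K_n :: "nat \<Rightarrow> real" where
  "K_n n = real n * (1 - 1 / real n) powr ((real n - 1) * ln (real n - 1))"

definition delta_n :: "nat \<Rightarrow> real" where
  "delta_n n = ln (1 - 1 / real n) - (1 / real n) * ln (real n - 1)"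

end

theory Submission
  imports Defs
begin

lemma pmf_geom1:
  assumes "0 < p" "p \<le> 1"
  shows "pmf (geom1_pmf p) j = (if j = 0 then 0 else (1 - p) ^ (j - 1) * p)"
proof (cases j)
  case 0
  have "0 \<notin> set_pmf (geom1_pmf p)" unfolding geom1_pmf_def by auto
  then show ?thesis using 0 by (simp add: set_pmf_eq)
next
  case (Suc i)
  have "pmf (geom1_pmf p) (Suc i) = pmf (geometric_pmf p) i"
    unfolding geom1_pmf_def by (rule pmf_map_inj') (simp add: inj_def)
  then show ?thesis using Suc assms by simp
qed

lemma pmf_shift:
  "pmf (map_pmf (\<lambda>x. s + x) (Q :: nat pmf)) t = (if s \<le> t then pmf Q (t - s) else 0)"
proof (cases "s \<le> t")
  case True
  then have "t = s + (t - s)" by simp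
  then have "pmf (map_pmf (\<lambda>x. s + x) Q) t = pmf (map_pmf (\<lambda>x. s + x) Q) (s + (t - s))" by simp
  also have "\<dots> = pmf Q (t - s)" by (rule pmf_map_inj') (simp add: inj_def)
  finally show ?thesis using True by simp
next
  case False
  then have "t \<notin> set_pmf (map_pmf (\<lambda>x. s + x) Q)" by auto
  then show ?thesis using False by (simp add: set_pmf_eq)
qed

lemma pmf_coupon_Suc:
  "pmf (coupon_partial_pmf m (Suc k)) t =
    (\<Sum>s\<in>{..t}. pmf (coupon_partial_pmf m k) s *
        pmf (geom1_pmf ((real m - real (Suc k) + 1) / real m)) (t - s))"
proof -
  let ?G = "geom1_pmf ((real m - real (Suc k) + 1) / real m)"
  have "pmf (coupon_partial_pmf m (Suc k)) t =
     (\<integral>s. pmf (map_pmf (\<lambda>x. s + x) ?G) t \<partial>measure_pmf (coupon_partial_pmf m k))"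
    by (simp add: pmf_bind)
  also have "\<dots> = (\<Sum>s\<in>{..t}. pmf (map_pmf (\<lambda>x. s + x) ?G) t * pmf (coupon_partial_pmf m k) s)"
    by (rule integral_measure_pmf_real) (auto simp: pmf_shift split: if_splits)
  also have "\<dots> = (\<Sum>s\<in>{..t}. pmf (coupon_partial_pmf m k) s * pmf ?G (t - s))"
    by (intro sum.cong) (auto simp: pmf_shift)
  finally show ?thesis .
qed

lemma geom_tilt:
  fixes n k j :: nat
  assumes "Suc k \<le> n - 1" "n \<ge> 2"
  shows "pmf (geom1_pmf ((real n - real (Suc k) + 1) / real n)) j =
     pmf (geom1_pmf ((real (n - 1) - real (Suc k) + 1) / real (n - 1))) j
       * (1 - 1 / real n) ^ j * ((real n - real k) / (real n - real k - 1))"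
proof -
  have n1: "real (n - 1) = real n - 1" using assms by simp
  have k: "real k + 2 \<le> real n" using assms by linarith
  have p1: "0 < (real n - real (Suc k) + 1) / real n" "(real n - real (Suc k) + 1) / real n \<le> 1"
    using k by auto
  have p2: "0 < (real (n - 1) - real (Suc k) + 1) / real (n - 1)"
      "(real (n - 1) - real (Suc k) + 1) / real (n - 1) \<le> 1"
    using k n1 by auto
  show ?thesis
  proof (cases j)
    case 0
    then show ?thesis using p1 p2 by (simp add: pmf_geom1)
  next
    case (Suc i)
    have a: "1 - (real n - real (Suc k) + 1) / real n = real k / real n" using k by (simp add: field_simps)
    have b: "1 - (real (n - 1) - real (Suc k) + 1) / real (n - 1) = real k / (real n - 1)"
      using k n1 by (simp add: field_simps)
    have c: "1 - 1 / real n = (real n - 1) / real n" using k by (simp add: field_simps)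
    have "(real k / real n) ^ i * ((real n - real (Suc k) + 1) / real n) =
        (real k / (real n - 1)) ^ i * ((real n - 1 - real (Suc k) + 1) / (real n - 1)) *
        ((real n - 1) / real n) ^ Suc i * ((real n - real k) / (real n - real k - 1))"
    proof -
      have h1: "(real k / (real n - 1)) ^ i * ((real n - 1) / real n) ^ i = (real k / real n) ^ i"
        using k by (simp add: power_mult_distrib[symmetric])
      have h2: "(real n - 1 - real (Suc k) + 1) = real n - real k - 1" by simp
      have h3: "real n - real k - 1 > 0" "real n - 1 > 0" "real n > 0" using k by auto
      have "(real k / (real n - 1)) ^ i * ((real n - 1 - real (Suc k) + 1) / (real n - 1)) *
        ((real n - 1) / real n) ^ Suc i * ((real n - real k) / (real n - real k - 1))
        = ((real k / (real n - 1)) ^ i * ((real n - 1) / real n) ^ i) *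
          (((real n - real k - 1) / (real n - 1)) * ((real n - 1) / real n) * ((real n - real k) / (real n - real k - 1)))"
        by (simp only: h2 power_Suc mult_ac)
      also have "\<dots> = (real k / real n) ^ i * ((real n - real k) / real n)"
      proof -
        have h4: "((real n - real k - 1) / (real n - 1)) * ((real n - 1) / real n) * ((real n - real k) / (real n - real k - 1)) = (real n - real k) / real n"
          using h3 by (simp add: divide_simps)
        show ?thesis by (simp only: h1 h4)
      qed
      finally show ?thesis by simp
    qed
    note E = this
    have L: "pmf (geom1_pmf ((real n - real (Suc k) + 1) / real n)) j = (real k / real n) ^ i * ((real n - real (Suc k) + 1) / real n)"
      unfolding pmf_geom1[OF p1] a using Suc by simp
    have R: "pmf (geom1_pmf ((real (n - 1) - real (Suc k) + 1) / real (n - 1))) j = (real k / (real n - 1)) ^ i * ((real n - 1 - real (Suc k) + 1) / (real n - 1))"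
      unfolding pmf_geom1[OF p2] b using Suc n1 by simp
    show ?thesis unfolding L R c using E Suc by simp
  qed
qed

lemma tilt:
  fixes n :: nat
  assumes "n \<ge> 2"
  shows "k \<le> n - 1 \<Longrightarrow> pmf (coupon_partial_pmf n k) t =
     pmf (coupon_partial_pmf (n - 1) k) t * (1 - 1 / real n) ^ t * (real n / (real n - real k))"
proof (induction k arbitrary: t)
  case 0
  then show ?case using assms by (cases t) (simp_all add: indicator_def)
next
  case (Suc k)
  have kn: "real k + 2 \<le> real n" using Suc.prems assms by linarith
  let ?c = "1 - 1 / real n"
  let ?G = "geom1_pmf ((real n - real (Suc k) + 1) / real n)"
  let ?H = "geom1_pmf ((real (n - 1) - real (Suc k) + 1) / real (n - 1))"
  have "pmf (coupon_partial_pmf n (Suc k)) t =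
     (\<Sum>s\<in>{..t}. pmf (coupon_partial_pmf n k) s * pmf ?G (t - s))"
    by (rule pmf_coupon_Suc)
  also have "\<dots> = (\<Sum>s\<in>{..t}. (pmf (coupon_partial_pmf (n - 1) k) s * pmf ?H (t - s)) *
      (?c ^ t * (real n / (real n - real (Suc k)))))"
  proof (intro sum.cong refl)
    fix s assume s: "s \<in> {..t}"
    have e: "?c ^ t = ?c ^ s * ?c ^ (t - s)" using s by (simp add: power_add[symmetric])
    show "pmf (coupon_partial_pmf n k) s * pmf ?G (t - s) =
      (pmf (coupon_partial_pmf (n - 1) k) s * pmf ?H (t - s)) *
      (?c ^ t * (real n / (real n - real (Suc k))))"
    proof -
      have ih: "pmf (coupon_partial_pmf n k) s = pmf (coupon_partial_pmf (n - 1) k) s * ?c ^ s * (real n / (real n - real k))"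
        using Suc.IH[of s] Suc.prems by simp
      have g: "pmf ?G (t - s) = pmf ?H (t - s) * ?c ^ (t - s) * ((real n - real k) / (real n - real k - 1))"
        by (rule geom_tilt[OF Suc.prems assms])
      have q: "(real n / (real n - real k)) * ((real n - real k) / (real n - real k - 1)) = real n / (real n - real (Suc k))"
      proof -
        have "real n - real k \<noteq> 0" "real n - real k - 1 \<noteq> 0" using kn by auto
        moreover have "real n - real (Suc k) = real n - real k - 1" by simp
        ultimately show ?thesis by (simp add: divide_simps)
      qed
      show ?thesis unfolding ih g e
        by (simp only: q[symmetric] mult_ac)
    qed
  qed
  also have "\<dots> = pmf (coupon_partial_pmf (n - 1) (Suc k)) t * ?c ^ t * (real n / (real n - real (Suc k)))"
    unfolding pmf_coupon_Suc[of "n - 1" k t] sum_distrib_right by (simp only: mult_ac)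
  finally show ?case .
qed

lemma T_formula:
  fixes n :: nat
  assumes n: "n \<ge> 2"
  shows "pmf (T_pmf n) t = (\<Sum>s\<in>{..t}. pmf (T_pmf (n - 1)) s * pmf (geom1_pmf (1 / real n)) (t - s)
            * (real n * (1 - 1 / real n) ^ s))"
proof -
  have nn: "n = Suc (n - 1)" using n by simp
  have p: "(real n - real (Suc (n - 1)) + 1) / real n = 1 / real n" using n by simp
  have q: "real n / (real n - real (n - 1)) = real n" using n by simp
  have "pmf (T_pmf n) t = pmf (coupon_partial_pmf n (Suc (n - 1))) t"
    unfolding T_pmf_def using nn by simp
  also have "\<dots> = (\<Sum>s\<in>{..t}. pmf (coupon_partial_pmf n (n - 1)) s * pmf (geom1_pmf (1 / real n)) (t - s))"
    unfolding pmf_coupon_Suc p ..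
  also have "\<dots> = (\<Sum>s\<in>{..t}. pmf (T_pmf (n - 1)) s * pmf (geom1_pmf (1 / real n)) (t - s)
            * (real n * (1 - 1 / real n) ^ s))"
    unfolding tilt[OF n order.refl] q T_pmf_def by (simp only: mult_ac)
  finally show ?thesis .
qed

lemma T_measure:
  fixes n :: nat
  assumes n: "n \<ge> 2"
  shows "measure_pmf (T_pmf n) = distr (density (measure_pmf (pair_pmf (T_pmf (n - 1)) (geom1_pmf (1 / real n))))
      (\<lambda>x. ennreal (real n * (1 - 1 / real n) ^ fst x))) (count_space UNIV) (\<lambda>(s, g). s + g)"
    (is "_ = distr (density (measure_pmf ?M) ?w) _ ?f")
proof (rule measure_eqI_countable[where A = UNIV])
  fix t :: nat
  have c0: "0 \<le> 1 - 1 / real n" using n by simp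
  have "emeasure (distr (density (measure_pmf ?M) ?w) (count_space UNIV) ?f) {t}
      = emeasure (density (measure_pmf ?M) ?w) (?f -` {t})"
    by (subst emeasure_distr) auto
  also have "\<dots> = (\<integral>\<^sup>+ x. ?w x * indicator (?f -` {t}) x \<partial>measure_pmf ?M)"
    by (subst emeasure_density) auto
  also have "\<dots> = (\<Sum>x\<in>(\<lambda>s. (s, t - s)) ` {..t}. ?w x * indicator (?f -` {t}) x * pmf ?M x)"
    by (rule nn_integral_measure_pmf_support) (auto simp: indicator_def image_iff)
  also have "\<dots> = (\<Sum>s\<in>{..t}. ?w (s, t - s) * indicator (?f -` {t}) (s, t - s) * pmf ?M (s, t - s))"
    by (subst sum.reindex) (auto simp: inj_on_def)
  also have "\<dots> = (\<Sum>s\<in>{..t}. ennreal (pmf (T_pmf (n - 1)) s * pmf (geom1_pmf (1 / real n)) (t - s)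
            * (real n * (1 - 1 / real n) ^ s)))"
    using c0 by (intro sum.cong refl) (auto simp: pmf_pair ennreal_mult'[symmetric] mult_ac)
  also have "\<dots> = ennreal (pmf (T_pmf n) t)"
    unfolding T_formula[OF n] using c0 by (intro sum_ennreal) auto
  also have "\<dots> = emeasure (measure_pmf (T_pmf n)) {t}"
    by (simp add: emeasure_pmf_single)
  finally show "emeasure (measure_pmf (T_pmf n)) {t} = emeasure (distr (density (measure_pmf ?M) ?w) (count_space UNIV) ?f) {t}" ..
qed auto

lemma pointwise:
  fixes n s g :: nat and h :: "real \<Rightarrow> real"
  assumes n: "n \<ge> 2"
  shows "(real n * (1 - 1 / real n) ^ s) * h (real (s + g) / real n - ln (real n)) =
    K_n n * (exp (- beta_n n * (real s / real (n - 1) - ln (real (n - 1)))) *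
      h (alpha_n n * (real s / real (n - 1) - ln (real (n - 1))) + real g / real n + delta_n n))"
proof -
  have n1: "real (n - 1) = real n - 1" using n by simp
  have pos: "real n - 1 > 0" "real n > 0" using n by auto
  have a: "1 - 1 / real n = (real n - 1) / real n" using pos by (simp add: field_simps)
  have apos: "1 - 1 / real n > 0" using pos by (simp add: a)
  have la: "ln (1 - 1 / real n) = ln (real n - 1) - ln (real n)" using pos by (simp add: a ln_div)
  have arg: "alpha_n n * (real s / real (n - 1) - ln (real (n - 1))) + real g / real n + delta_n n
      = real (s + g) / real n - ln (real n)"
    unfolding alpha_n_def delta_n_def n1 la using pos by (simp add: field_simps)
  define L where "L = (real n - 1) * ln (real n - 1)"
  define l where "l = ln (1 - 1 / real n)"
  have "K_n n * exp (- beta_n n * (real s / real (n - 1) - ln (real (n - 1))))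
      = real n * exp (L * l) * exp (real s * l - L * l)"
    unfolding K_n_def beta_n_def alpha_n_def n1 L_def l_def powr_def using pos apos
    by (simp add: field_simps)
  also have "\<dots> = real n * exp (real s * l)"
    by (simp add: mult.assoc exp_add[symmetric])
  also have "\<dots> = real n * (1 - 1 / real n) ^ s"
    unfolding l_def using apos by (simp add: exp_of_nat_mult)
  finally have w: "K_n n * exp (- beta_n n * (real s / real (n - 1) - ln (real (n - 1)))) = real n * (1 - 1 / real n) ^ s" .
  show ?thesis unfolding arg by (simp only: w[symmetric] mult_ac)
qed

theorem lemma3p3:
  fixes f :: "real \<Rightarrow> real" and n :: nat
  assumes "f C1_differentiable_on UNIV"
    and "n \<ge> 2"
  shows "measure_pmf.expectation (Z_pmf n) (\<lambda>z. deriv f z) =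
         K_n n * measure_pmf.expectation (pair_pmf (Z_pmf (n - 1)) (G_pmf n))
           (\<lambda>(z, g). exp (- beta_n n * z) * deriv f (alpha_n n * z + g + delta_n n))"
proof -
  let ?M = "pair_pmf (T_pmf (n - 1)) (geom1_pmf (1 / real n))"
  let ?W = "\<lambda>x::nat\<times>nat. real n * (1 - 1 / real n) ^ fst x"
  have c0: "0 \<le> 1 - 1 / real n" using assms(2) by simp
  have "measure_pmf.expectation (Z_pmf n) (\<lambda>z. deriv f z)
      = integral\<^sup>L (measure_pmf (T_pmf n)) (\<lambda>t. deriv f (real t / real n - ln (real n)))"
    unfolding Z_pmf_def by simp
  also have "\<dots> = integral\<^sup>L (density (measure_pmf ?M) (\<lambda>x. ennreal (?W x)))
        (\<lambda>x. deriv f (real ((\<lambda>(s, g). s + g) x) / real n - ln (real n)))"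
    unfolding T_measure[OF assms(2)] by (subst integral_distr) auto
  also have "\<dots> = integral\<^sup>L (measure_pmf ?M) (\<lambda>x. ?W x *\<^sub>R deriv f (real ((\<lambda>(s, g). s + g) x) / real n - ln (real n)))"
    using c0 by (subst integral_density) auto
  also have "\<dots> = integral\<^sup>L (measure_pmf ?M) (\<lambda>x. K_n n * (case x of (s, g) \<Rightarrow>
       exp (- beta_n n * (real s / real (n - 1) - ln (real (n - 1)))) *
       deriv f (alpha_n n * (real s / real (n - 1) - ln (real (n - 1))) + real g / real n + delta_n n)))"
  proof (intro Bochner_Integration.integral_cong refl)
    fix x :: "nat \<times> nat"
    obtain s g where x: "x = (s, g)" by (cases x)
    show "?W x *\<^sub>R deriv f (real ((\<lambda>(s, g). s + g) x) / real n - ln (real n)) = K_n n * (case x of (s, g) \<Rightarrow>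
       exp (- beta_n n * (real s / real (n - 1) - ln (real (n - 1)))) *
       deriv f (alpha_n n * (real s / real (n - 1) - ln (real (n - 1))) + real g / real n + delta_n n))"
      using pointwise[OF assms(2), where s=s and g=g and h="deriv f"] by (simp only: x prod.case fst_conv real_scaleR_def)
  qed
  also have "\<dots> = K_n n * measure_pmf.expectation (pair_pmf (Z_pmf (n - 1)) (G_pmf n))
           (\<lambda>(z, g). exp (- beta_n n * z) * deriv f (alpha_n n * z + g + delta_n n))"
    unfolding Z_pmf_def G_pmf_def T_pmf_def map_pair[symmetric] by (simp add: case_prod_beta)
  finally show ?thesis .
qed

end
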